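(* Let $w=a_{u_1^1}\cdots a_{u_n^r}|b_{v_1^1}\cdots b_{v_n^r}\in W^*(d,2m;\mathbb T)$. Then [$\phi(w)$ is an $r$-configuration of $U$ and $V$ and $\Phi(\phi(w))=w$] if and only if $w$ satisfies Condition (C).
   Context: $n,r,d\ge1$, $m=rn$. $U=\{u_1\prec\cdots\prec u_n\}$, $V=\{v_1\prec\cdots\prec v_n\}$; $\overline U=U\times[r]$, $\overline V=V\times[r]$ ordered lexicographically (write $u^s$ for $(u,s)$). An $r$-configuration is a bijection between $\overline U$ and $\overline V$; a quasi configuration is a partial matching. Pairs $(\bar u,\bar v),(\bar u',\bar v')$ are noncrossing if ($\bar u\prec\bar u'$ and $\bar v\prec\bar v'$) or ($\bar u'\prec\bar u$ and $\bar v'\prec\bar v$). Walks $w=a_{u_1^1}\cdots a_{u_n^r}|b_{v_1^1}\cdots b_{v_n^r}$, $a_{\bar u},b_{\bar v}\in[d]$, denote walks in $\mathbb Z^d$ from the origin with steps $e_{a_{\bar u}}$ ($\bar u$ increasing) then $-e_{b_{\bar v}}$ ($\bar v$ increasing). For a permutation $\pi$ of $[d]$, $T(\pi)=(1-\pi(1),\dots,d-\pi(d))$; $\mathbb T$ is the set of all $T(\pi)$; $W^*(d,2m;\mathbb T)$ is the set of such walks ending in $\mathbb T$. For an $r$-configuration $F$: $a_{\bar u}$ is the maximum size of a set of pairwise noncrossing pairs of $F$ containing the pair $(\bar u,\bar v')\in F$, all of whose pairs $(x,y)$ satisfy $x\preceq\bar u$, $y\preceq\bar v'$; $b_{\bar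 v}$ symmetrically; $\Phi(F)=a_{u_1^1}\cdots a_{u_n^r}|b_{v_1^1}\cdots b_{v_n^r}$. $A_k(w)=\{\bar u:a_{\bar u}=k\}$, $B_k(w)=\{\bar v:b_{\bar v}=k\}$; connecting equal-size ordered sets $A,B$ in a crossing way: pair the $i$-th smallest of $A$ with the $i$-th largest of $B$; $\phi(w)$: for each $k$, if $|A_k(w)|\ge|B_k(w)|$ connect the $|B_k(w)|$ smallest elements of $A_k(w)$ with $B_k(w)$ in a crossing way, else connect $A_k(w)$ with the $|A_k(w)|$ largest elements of $B_k(w)$ in a crossing way. For $\bar u\in\overline U$, $k(\bar u)=|\{\bar u'\preceq\bar u: a_{\bar u'}=a_{\bar u}\}|$ and $l(\bar u)=|\{\bar u'\preceq\bar u: a_{\bar u'}=a_{\bar u}-1\}|$. Condition (C): for every $\bar u$ with $a_{\bar u}>1$, we have $l(\bar u)>0$, the negative step sequence $b_{v_1^1}\cdots b_{v_n^r}$ contains at least $l(\bar u)$ occurrences of $a_{\bar u}-1$ and at least $k(\bar u)$ occurrences of $a_{\bar u}$, and the $l(\bar u)$-th-to-last occurrence of $a_{\bar u}-1$ in it comes before the $k(\bar u)$-th-to-last occurrence of $a_{\bar u}$ in it. *)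

theory Defs
  imports Main "HOL-Library.Product_Lexorder" "HOL-Combinatorics.Permutations"
begin

(* An element u_i^s of \<bar>U = U \<times> [r] is encoded as the pair (i, s) with i < n, s < r
   (0-based); likewise for \<bar>V.  Pairs carry the lexicographic order
   (HOL-Library.Product_Lexorder), which is exactly the order of the paper. *)
definition Ibar :: "nat \<Rightarrow> nat \<Rightarrow> (nat \<times> nat) set" where
  "Ibar n r = {0..<n} \<times> {0..<r}"

type_synonym elt = "nat \<times> nat"

(* A walk w = a_{u_1^1} ... a_{u_n^r} | b_{v_1^1} ... b_{v_n^r} is given by two labellings
   a, b :: elt \<Rightarrow> nat (only their values on \<bar>U resp. \<bar>V matter). *)

definition Aset :: "nat \<Rightarrow> nat \<Rightarrow> (elt \<Rightarrow> nat) \<Rightarrow> nat \<Rightarrow> elt set" where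
  "Aset n r a k = {u \<in> Ibar n r. a u = k}"
definition Bset :: "nat \<Rightarrow> nat \<Rightarrow> (elt \<Rightarrow> nat) \<Rightarrow> nat \<Rightarrow> elt set" where
  "Bset n r b k = {v \<in> Ibar n r. b v = k}"

(* the walk has steps in [d] and ends in \<T> = {T(\<pi>)}, T(\<pi>) = (1-\<pi>(1),...,d-\<pi>(d)) *)
definition in_Wstar :: "nat \<Rightarrow> nat \<Rightarrow> nat \<Rightarrow> (elt \<Rightarrow> nat) \<Rightarrow> (elt \<Rightarrow> nat) \<Rightarrow> bool" where
  "in_Wstar d n r a b \<longleftrightarrow>
     (\<forall>u \<in> Ibar n r. a u \<in> {1..d}) \<and> (\<forall>v \<in> Ibar n r. b v \<in> {1..d}) \<and>
     (\<exists>\<pi>. \<pi> permutes {1..d} \<and>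
        (\<forall>k \<in> {1..d}. int (card (Aset n r a k)) - int (card (Bset n r b k)) = int k - int (\<pi> k)))"

definition r_configuration :: "nat \<Rightarrow> nat \<Rightarrow> (elt \<times> elt) set \<Rightarrow> bool" where
  "r_configuration n r F \<longleftrightarrow> F \<subseteq> Ibar n r \<times> Ibar n r \<and>
     (\<forall>u \<in> Ibar n r. \<exists>!v. (u, v) \<in> F) \<and> (\<forall>v \<in> Ibar n r. \<exists>!u. (u, v) \<in> F)"

definition noncrossing :: "elt \<times> elt \<Rightarrow> elt \<times> elt \<Rightarrow> bool" where
  "noncrossing p q \<longleftrightarrow> (fst p < fst q \<and> snd p < snd q) \<or> (fst q < fst p \<and> snd q < snd p)"

definition pairwise_noncrossing :: "(elt \<times> elt) set \<Rightarrow> bool" where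
  "pairwise_noncrossing S \<longleftrightarrow> (\<forall>p \<in> S. \<forall>q \<in> S. p \<noteq> q \<longrightarrow> noncrossing p q)"

definition Phi_a :: "(elt \<times> elt) set \<Rightarrow> elt \<Rightarrow> nat" where
  "Phi_a F u = Max {card S | S v'. (u, v') \<in> F \<and> S \<subseteq> F \<and> pairwise_noncrossing S \<and>
      (u, v') \<in> S \<and> (\<forall>(x, y) \<in> S. x \<le> u \<and> y \<le> v')}"

definition Phi_b :: "(elt \<times> elt) set \<Rightarrow> elt \<Rightarrow> nat" where
  "Phi_b F v = Max {card S | S u'. (u', v) \<in> F \<and> S \<subseteq> F \<and> pairwise_noncrossing S \<and>
      (u', v) \<in> S \<and> (\<forall>(x, y) \<in> S. x \<le> u' \<and> y \<le> v)}"

definition cross_connect :: "elt set \<Rightarrow> elt set \<Rightarrow> (elt \<times> elt) set" where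
  "cross_connect A B =
     {(sorted_list_of_set A ! i, rev (sorted_list_of_set B) ! i) | i. i < card A}"

definition phi :: "nat \<Rightarrow> nat \<Rightarrow> nat \<Rightarrow> (elt \<Rightarrow> nat) \<Rightarrow> (elt \<Rightarrow> nat) \<Rightarrow> (elt \<times> elt) set" where
  "phi d n r a b = (\<Union>k \<in> {1..d}.
     (let A = Aset n r a k; B = Bset n r b k in
      if card A \<ge> card B
      then cross_connect (set (take (card B) (sorted_list_of_set A))) B
      else cross_connect A (set (drop (card B - card A) (sorted_list_of_set B)))))"

(* the i-th-to-last (i \<ge> 1) element of a finite ordered set *)
definition kth_last :: "elt set \<Rightarrow> nat \<Rightarrow> elt" where
  "kth_last S i = rev (sorted_list_of_set S) ! (i - 1)"

definition kfun :: "nat \<Rightarrow> nat \<Rightarrow> (elt \<Rightarrow> nat) \<Rightarrow> elt \<Rightarrow> nat" where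
  "kfun n r a u = card {u' \<in> Ibar n r. u' \<le> u \<and> a u' = a u}"
definition lfun :: "nat \<Rightarrow> nat \<Rightarrow> (elt \<Rightarrow> nat) \<Rightarrow> elt \<Rightarrow> nat" where
  "lfun n r a u = card {u' \<in> Ibar n r. u' \<le> u \<and> a u' = a u - 1}"

(* Condition (C); occurrences of a value c in the negative step sequence are the
   elements of Bset n r b c, ordered as in \<bar>V *)
definition condition_C :: "nat \<Rightarrow> nat \<Rightarrow> (elt \<Rightarrow> nat) \<Rightarrow> (elt \<Rightarrow> nat) \<Rightarrow> bool" where
  "condition_C n r a b \<longleftrightarrow> (\<forall>u \<in> Ibar n r. a u > 1 \<longrightarrow>
      lfun n r a u > 0 \<and>
      card (Bset n r b (a u - 1)) \<ge> lfun n r a u \<and>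
      card (Bset n r b (a u)) \<ge> kfun n r a u \<and>
      kth_last (Bset n r b (a u - 1)) (lfun n r a u) < kth_last (Bset n r b (a u)) (kfun n r a u))"

end

theory Submission
  imports Defs
begin


lemma sl_nth_less:
  fixes S :: "'a::linorder set"
  assumes "finite S" "i < j" "j < card S"
  shows "sorted_list_of_set S ! i < sorted_list_of_set S ! j"
  using assms by (metis length_sorted_list_of_set sorted_wrt_nth_less strict_sorted_list_of_set)

lemma sl_nth_mem:
  fixes S :: "'a::linorder set"
  assumes "finite S" "i < card S"
  shows "sorted_list_of_set S ! i \<in> S"
  using assms by (metis length_sorted_list_of_set nth_mem set_sorted_list_of_set)

lemma sl_nth_less_iff:
  fixes S :: "'a::linorder set"
  assumes "finite S" "i < card S" "j < card S"
  shows "sorted_list_of_set S ! i < sorted_list_of_set S ! j \<longleftrightarrow> i < j"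
  using sl_nth_less[OF assms(1)] assms
  by (metis linorder_neqE_nat order_less_asym order_less_irrefl)

lemma sl_nth_le_iff:
  fixes S :: "'a::linorder set"
  assumes "finite S" "i < card S" "j < card S"
  shows "sorted_list_of_set S ! i \<le> sorted_list_of_set S ! j \<longleftrightarrow> i \<le> j"
  using sl_nth_less_iff[OF assms(1) assms(3) assms(2)] by (simp add: not_less[symmetric])

lemma sl_rank_nth:
  fixes S :: "'a::linorder set"
  assumes "finite S" "i < card S"
  shows "card {y\<in>S. y < sorted_list_of_set S ! i} = i"
proof -
  let ?s = "sorted_list_of_set S"
  have "{y\<in>S. y < ?s ! i} = (\<lambda>j. ?s ! j) ` {..<i}"
  proof (intro set_eqI iffI)
    fix y assume "y \<in> {y\<in>S. y < ?s ! i}"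
    then have "y \<in> set ?s" "y < ?s ! i" using assms by auto
    then obtain j where j: "j < card S" "y = ?s ! j" by (metis in_set_conv_nth length_sorted_list_of_set)
    then have "j < i" using sl_nth_less_iff[OF assms(1) j(1) assms(2)] \<open>y < ?s ! i\<close> by simp
    then show "y \<in> (\<lambda>j. ?s ! j) ` {..<i}" using j by auto
  next
    fix y assume "y \<in> (\<lambda>j. ?s ! j) ` {..<i}"
    then obtain j where j: "j < i" "y = ?s ! j" by auto
    then show "y \<in> {y\<in>S. y < ?s ! i}" using assms sl_nth_mem sl_nth_less by fastforce
  qed
  moreover have "inj_on (\<lambda>j. ?s ! j) {..<i}"
    using assms by (intro inj_onI) (metis lessThan_iff linorder_neqE_nat order_less_irrefl order.strict_trans sl_nth_less)
  ultimately show ?thesis by (simp add: card_image)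
qed

lemma sl_rank_bound:
  fixes S :: "'a::linorder set"
  assumes "finite S" "x \<in> S"
  shows "card {y\<in>S. y < x} < card S"
  using assms by (intro psubset_card_mono) auto

lemma sl_nth_rank:
  fixes S :: "'a::linorder set"
  assumes "finite S" "x \<in> S"
  shows "sorted_list_of_set S ! card {y\<in>S. y < x} = x"
proof -
  obtain j where j: "j < card S" "x = sorted_list_of_set S ! j"
    using assms by (metis in_set_conv_nth length_sorted_list_of_set set_sorted_list_of_set)
  then show ?thesis using sl_rank_nth[OF assms(1) j(1)] by simp
qed

lemma sl_rev_nth:
  fixes S :: "'a::linorder set"
  assumes "finite S" "i < card S"
  shows "rev (sorted_list_of_set S) ! i = sorted_list_of_set S ! (card S - 1 - i)"
  using assms by (simp add: rev_nth)



definition rk :: "elt set \<Rightarrow> elt \<Rightarrow> nat" where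
  "rk S x = card {y\<in>S. y < x}"

lemma finite_Ibar[simp]: "finite (Ibar n r)"
  unfolding Ibar_def by simp

lemma finite_Aset[simp]: "finite (Aset n r a k)"
  unfolding Aset_def by simp

lemma finite_Bset[simp]: "finite (Bset n r b k)"
  unfolding Bset_def by simp

lemma rk_mono: "finite S \<Longrightarrow> x \<le> y \<Longrightarrow> rk S x \<le> rk S y"
  unfolding rk_def by (intro card_mono) auto

lemma rk_strict: "finite S \<Longrightarrow> x < y \<Longrightarrow> x \<in> S \<Longrightarrow> rk S x < rk S y"
  unfolding rk_def by (intro psubset_card_mono) auto

lemma rk_less_iff: "finite S \<Longrightarrow> x \<in> S \<Longrightarrow> y \<in> S \<Longrightarrow> rk S x < rk S y \<longleftrightarrow> x < y"
proof
  assume "rk S x < rk S y" "finite S"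
  show "x < y"
  proof (rule ccontr)
    assume "\<not> x < y" then have "y \<le> x" by simp
    then show False using rk_mono[of S y x] \<open>rk S x < rk S y\<close> \<open>finite S\<close> by simp
  qed
qed (rule rk_strict)

lemma cc_mem:
  assumes "finite X" "finite Y" "card X = card Y"
  shows "(u, v) \<in> cross_connect X Y \<longleftrightarrow> u \<in> X \<and> v \<in> Y \<and> rk X u + rk Y v + 1 = card X"
proof
  assume "(u, v) \<in> cross_connect X Y"
  then obtain i where i: "i < card X" "u = sorted_list_of_set X ! i"
      "v = rev (sorted_list_of_set Y) ! i" unfolding cross_connect_def by auto
  then have v: "v = sorted_list_of_set Y ! (card Y - 1 - i)" using assms sl_rev_nth by auto
  have "rk X u = i" using i(2) sl_rank_nth[OF assms(1) i(1)] unfolding rk_def by simp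
  moreover have "card Y - 1 - i < card Y" using i assms by linarith
  then have "rk Y v = card Y - 1 - i" using v sl_rank_nth[OF assms(2)] unfolding rk_def by simp
  moreover have "u \<in> X" using i(2) sl_nth_mem[OF assms(1) i(1)] by simp
  moreover have "v \<in> Y" using v sl_nth_mem[OF assms(2) \<open>card Y - 1 - i < card Y\<close>] by simp
  ultimately show "u \<in> X \<and> v \<in> Y \<and> rk X u + rk Y v + 1 = card X"
    using i(1) assms(3) by simp
next
  assume h: "u \<in> X \<and> v \<in> Y \<and> rk X u + rk Y v + 1 = card X"
  define i where "i = rk X u"
  have i: "i < card X" using h unfolding i_def by linarith
  have u: "u = sorted_list_of_set X ! i" using sl_nth_rank[OF assms(1), of u] h unfolding i_def rk_def by simp
  have "v = sorted_list_of_set Y ! rk Y v" using sl_nth_rank[OF assms(2), of v] h unfolding rk_def by simp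
  also have "rk Y v = card Y - 1 - i" using h assms unfolding i_def by linarith
  finally have "v = rev (sorted_list_of_set Y) ! i" using sl_rev_nth[OF assms(2), of i] assms(3) i by simp
  then show "(u, v) \<in> cross_connect X Y" using u i unfolding cross_connect_def by auto
qed

lemma cc_sub:
  assumes "finite X" "finite Y" "card X \<le> card Y"
  shows "cross_connect X Y \<subseteq> X \<times> Y"
proof
  fix p assume "p \<in> cross_connect X Y"
  then obtain i where i: "i < card X" "p = (sorted_list_of_set X ! i, rev (sorted_list_of_set Y) ! i)"
    unfolding cross_connect_def by auto
  have "rev (sorted_list_of_set Y) ! i \<in> set (rev (sorted_list_of_set Y))"
    using i assms by (intro nth_mem) simp
  then show "p \<in> X \<times> Y" using i assms sl_nth_mem by auto
qed

lemma level_sub: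
  "(let A = Aset n r a k; B = Bset n r b k in
      if card A \<ge> card B
      then cross_connect (set (take (card B) (sorted_list_of_set A))) B
      else cross_connect A (set (drop (card B - card A) (sorted_list_of_set B))))
   \<subseteq> Aset n r a k \<times> Bset n r b k"
proof -
  let ?A = "Aset n r a k" and ?B = "Bset n r b k"
  show ?thesis
  proof (cases "card ?A \<ge> card ?B")
    case True
    let ?X = "set (take (card ?B) (sorted_list_of_set ?A))"
    have "?X \<subseteq> ?A" using set_take_subset[of "card ?B" "sorted_list_of_set ?A"] by simp
    moreover have "card ?X \<le> card ?B"
      using card_length[of "take (card ?B) (sorted_list_of_set ?A)"] by simp
    moreover have "cross_connect ?X ?B \<subseteq> ?X \<times> ?B"
      using calculation by (intro cc_sub) (auto intro: finite_subset)
    ultimately have "cross_connect ?X ?B \<subseteq> ?A \<times> ?B" by blast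
    then show ?thesis using True unfolding Let_def by (simp only: if_True)
  next
    case False
    let ?Y = "set (drop (card ?B - card ?A) (sorted_list_of_set ?B))"
    have "?Y \<subseteq> ?B" using set_drop_subset[of "card ?B - card ?A" "sorted_list_of_set ?B"] by simp
    moreover have "card ?Y = card ?A"
      using False by (simp add: distinct_card)
    moreover have "cross_connect ?A ?Y \<subseteq> ?A \<times> ?Y"
      using calculation by (intro cc_sub) (auto intro: finite_subset)
    ultimately have "cross_connect ?A ?Y \<subseteq> ?A \<times> ?B" by blast
    then show ?thesis using False unfolding Let_def by (simp only: if_False)
  qed
qed

lemma phi_sub:
  "phi d n r a b \<subseteq> {(u, v). u \<in> Ibar n r \<and> v \<in> Ibar n r \<and> b v = a u}"
proof
  fix p assume "p \<in> phi d n r a b"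
  then obtain k where k: "p \<in> (let A = Aset n r a k; B = Bset n r b k in
      if card A \<ge> card B
      then cross_connect (set (take (card B) (sorted_list_of_set A))) B
      else cross_connect A (set (drop (card B - card A) (sorted_list_of_set B))))"
    unfolding phi_def by blast
  then have "p \<in> Aset n r a k \<times> Bset n r b k" using level_sub by blast
  then show "p \<in> {(u, v). u \<in> Ibar n r \<and> v \<in> Ibar n r \<and> b v = a u}"
    unfolding Aset_def Bset_def by auto
qed

lemma phi_eq:
  assumes "\<forall>k. card (Aset n r a k) = card (Bset n r b k)"
  shows "phi d n r a b = (\<Union>k\<in>{1..d}. cross_connect (Aset n r a k) (Bset n r b k))"
  unfolding phi_def Let_def using assms by simp

lemma config_E:
  assumes "r_configuration n r (phi d n r a b)"
  shows "card (Aset n r a k) = card (Bset n r b k)"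
proof -
  let ?F = "phi d n r a b"
  let ?G = "{p \<in> ?F. a (fst p) = k}"
  have sub: "?F \<subseteq> {(u, v). u \<in> Ibar n r \<and> v \<in> Ibar n r \<and> b v = a u}" by (rule phi_sub)
  have c: "\<forall>u \<in> Ibar n r. \<exists>!v. (u, v) \<in> ?F" "\<forall>v \<in> Ibar n r. \<exists>!u. (u, v) \<in> ?F"
    using assms unfolding r_configuration_def by auto
  have inj1: "inj_on fst ?G"
  proof (rule inj_onI)
    fix p q assume "p \<in> ?G" "q \<in> ?G" "fst p = fst q"
    have "fst p \<in> Ibar n r" using \<open>p \<in> ?G\<close> sub by auto
    then have "\<exists>!v. (fst p, v) \<in> ?F" using c(1) by blast
    moreover have "(fst p, snd p) \<in> ?F" using \<open>p \<in> ?G\<close> by simp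
    moreover have "(fst p, snd q) \<in> ?F"
    proof -
      have "(fst p, snd q) = q" using \<open>fst p = fst q\<close> by simp
      then show ?thesis using \<open>q \<in> ?G\<close> by simp
    qed
    ultimately have "snd p = snd q" by blast
    then show "p = q" using \<open>fst p = fst q\<close> by (simp add: prod_eq_iff)
  qed
  have inj2: "inj_on snd ?G"
  proof (rule inj_onI)
    fix p q assume "p \<in> ?G" "q \<in> ?G" "snd p = snd q"
    have "snd p \<in> Ibar n r" using \<open>p \<in> ?G\<close> sub by auto
    then have "\<exists>!u. (u, snd p) \<in> ?F" using c(2) by blast
    moreover have "(fst p, snd p) \<in> ?F" using \<open>p \<in> ?G\<close> by simp
    moreover have "(fst q, snd p) \<in> ?F"
    proof -
      have "(fst q, snd p) = q" using \<open>snd p = snd q\<close> by simp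
      then show ?thesis using \<open>q \<in> ?G\<close> by simp
    qed
    ultimately have "fst p = fst q" by blast
    then show "p = q" using \<open>snd p = snd q\<close> by (simp add: prod_eq_iff)
  qed
  have i1: "fst ` ?G = Aset n r a k"
  proof
    show "fst ` ?G \<subseteq> Aset n r a k" using sub unfolding Aset_def by auto
    show "Aset n r a k \<subseteq> fst ` ?G"
    proof
      fix u assume u: "u \<in> Aset n r a k"
      then obtain v where "(u, v) \<in> ?F" using c(1) unfolding Aset_def by auto
      then show "u \<in> fst ` ?G" using u unfolding Aset_def by force
    qed
  qed
  have i2: "snd ` ?G = Bset n r b k"
  proof
    show "snd ` ?G \<subseteq> Bset n r b k" using sub unfolding Bset_def by auto
    show "Bset n r b k \<subseteq> snd ` ?G"
    proof
      fix v assume v: "v \<in> Bset n r b k"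
      then obtain u where uv: "(u, v) \<in> ?F" using c(2) unfolding Bset_def by auto
      then have "a u = k" using sub v unfolding Bset_def by auto
      then show "v \<in> snd ` ?G" using uv by force
    qed
  qed
  show ?thesis using card_image[OF inj1] card_image[OF inj2] i1 i2 by simp
qed



lemma card_I_sumA:
  assumes "\<forall>u \<in> Ibar n r. a u \<in> {1..d}"
  shows "card (Ibar n r) = (\<Sum>k\<in>{1..d}. card (Aset n r a k))"
proof -
  have "Ibar n r = (\<Union>k\<in>{1..d}. Aset n r a k)" using assms unfolding Aset_def by auto
  moreover have "card (\<Union>k\<in>{1..d}. Aset n r a k) = (\<Sum>k\<in>{1..d}. card (Aset n r a k))"
    by (rule card_UN_disjoint) (auto simp: Aset_def)
  ultimately show ?thesis by simp
qed

lemma card_I_sumB: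
  assumes "\<forall>u \<in> Ibar n r. b u \<in> {1..d}"
  shows "card (Ibar n r) = (\<Sum>k\<in>{1..d}. card (Bset n r b k))"
proof -
  have "Ibar n r = (\<Union>k\<in>{1..d}. Bset n r b k)" using assms unfolding Bset_def by auto
  moreover have "card (\<Union>k\<in>{1..d}. Bset n r b k) = (\<Sum>k\<in>{1..d}. card (Bset n r b k))"
    by (rule card_UN_disjoint) (auto simp: Bset_def)
  ultimately show ?thesis by simp
qed

lemma C_ge:
  assumes C: "condition_C n r a b" and k: "k \<ge> 2"
  shows "card (Aset n r a k) \<le> card (Bset n r b k)"
proof (cases "Aset n r a k = {}")
  case True then show ?thesis by simp
next
  case False
  define u where "u = Max (Aset n r a k)"
  have u: "u \<in> Aset n r a k" using False unfolding u_def by (intro Max_in) auto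
  then have uI: "u \<in> Ibar n r" and au: "a u = k" unfolding Aset_def by auto
  have "{u' \<in> Ibar n r. u' \<le> u \<and> a u' = a u} = Aset n r a k"
    using au unfolding u_def by (auto simp: Aset_def)
  then have "kfun n r a u = card (Aset n r a k)" unfolding kfun_def by simp
  moreover have "card (Bset n r b (a u)) \<ge> kfun n r a u"
    using C uI au k unfolding condition_C_def by auto
  ultimately show ?thesis using au by simp
qed

lemma C_E:
  assumes W: "in_Wstar d n r a b" and C: "condition_C n r a b"
  shows "card (Aset n r a k) = card (Bset n r b k)"
proof -
  have va: "\<forall>u \<in> Ibar n r. a u \<in> {1..d}" and vb: "\<forall>v \<in> Ibar n r. b v \<in> {1..d}"
    using W unfolding in_Wstar_def by auto
  obtain \<pi> where pi: "\<pi> permutes {1..d}"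
    "\<forall>k \<in> {1..d}. int (card (Aset n r a k)) - int (card (Bset n r b k)) = int k - int (\<pi> k)"
    using W unfolding in_Wstar_def by blast
  define f where "f k = int (card (Bset n r b k)) - int (card (Aset n r a k))" for k
  have fnn: "\<forall>k\<in>{1..d}. 0 \<le> f k"
  proof
    fix k assume kd: "k \<in> {1..d}"
    show "0 \<le> f k"
    proof (cases "k \<ge> 2")
      case True then show ?thesis using C_ge[OF C True] unfolding f_def by simp
    next
      case False
      then have "k = 1" using kd by auto
      moreover have "\<pi> 1 \<in> {1..d}" using permutes_in_image[OF pi(1)] kd \<open>k = 1\<close> by simp
      ultimately show ?thesis using pi(2) kd unfolding f_def by force
    qed
  qed
  have "(\<Sum>k\<in>{1..d}. f k) = int (\<Sum>k\<in>{1..d}. card (Bset n r b k)) - int (\<Sum>k\<in>{1..d}. card (Aset n r a k))"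
    unfolding f_def by (simp add: sum_subtractf)
  also have "\<dots> = 0" using card_I_sumA[OF va] card_I_sumB[OF vb] by simp
  finally have "\<forall>k\<in>{1..d}. f k = 0" using sum_nonneg_eq_0_iff[of "{1..d}" f] fnn by simp
  show ?thesis
  proof (cases "k \<in> {1..d}")
    case True then show ?thesis using \<open>\<forall>k\<in>{1..d}. f k = 0\<close> unfolding f_def by force
  next
    case False
    then have "Aset n r a k = {}" "Bset n r b k = {}" using va vb unfolding Aset_def Bset_def by auto
    then show ?thesis by simp
  qed
qed



definition chainF :: "(elt \<times> elt) set \<Rightarrow> elt \<Rightarrow> elt \<Rightarrow> (elt \<times> elt) set \<Rightarrow> bool" where
  "chainF F u v S \<longleftrightarrow> S \<subseteq> F \<and> pairwise_noncrossing S \<and> (u, v) \<in> S \<and> (\<forall>(x, y) \<in> S. x \<le> u \<and> y \<le> v)"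

definition val :: "(elt \<times> elt) set \<Rightarrow> elt \<Rightarrow> elt \<Rightarrow> nat" where
  "val F u v = Max {card S | S. chainF F u v S}"

lemma val_set_finite:
  assumes "finite F"
  shows "finite {card S | S. chainF F u v S}"
proof -
  have "{card S | S. chainF F u v S} \<subseteq> {..card F}"
    using assms unfolding chainF_def by (auto intro: card_mono)
  then show ?thesis using finite_subset by blast
qed

lemma chain_single: "(u, v) \<in> F \<Longrightarrow> chainF F u v {(u, v)}"
  unfolding chainF_def pairwise_noncrossing_def by auto

lemma val_ge: "finite F \<Longrightarrow> chainF F u v S \<Longrightarrow> card S \<le> val F u v"
  unfolding val_def by (rule Max_ge) (auto simp: val_set_finite)

lemma val_attain:
  assumes "finite F" "(u, v) \<in> F"
  shows "\<exists>S. chainF F u v S \<and> card S = val F u v"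
proof -
  have "val F u v \<in> {card S | S. chainF F u v S}"
    unfolding val_def using val_set_finite[OF assms(1)] chain_single[OF assms(2)]
    by (intro Max_in) auto
  then show ?thesis by auto
qed

lemma val_eqI:
  assumes "finite F" "chainF F u v S0" "card S0 = K" "\<And>S. chainF F u v S \<Longrightarrow> card S \<le> K"
  shows "val F u v = K"
  unfolding val_def using assms val_set_finite[OF assms(1)]
  by (intro Max_eqI) auto

lemma Phi_a_val:
  assumes "(u, v) \<in> F" "\<And>v'. (u, v') \<in> F \<Longrightarrow> v' = v"
  shows "Phi_a F u = val F u v"
proof -
  have "{card S | S v'. (u, v') \<in> F \<and> S \<subseteq> F \<and> pairwise_noncrossing S \<and>
      (u, v') \<in> S \<and> (\<forall>(x, y) \<in> S. x \<le> u \<and> y \<le> v')} = {card S | S. chainF F u v S}"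
    unfolding chainF_def using assms by blast
  then show ?thesis unfolding Phi_a_def val_def by simp
qed

lemma Phi_b_val:
  assumes "(u, v) \<in> F" "\<And>u'. (u', v) \<in> F \<Longrightarrow> u' = u"
  shows "Phi_b F v = val F u v"
proof -
  have "{card S | S u'. (u', v) \<in> F \<and> S \<subseteq> F \<and> pairwise_noncrossing S \<and>
      (u', v) \<in> S \<and> (\<forall>(x, y) \<in> S. x \<le> u' \<and> y \<le> v)} = {card S | S. chainF F u v S}"
    unfolding chainF_def using assms by blast
  then show ?thesis unfolding Phi_b_def val_def by simp
qed

lemma kth_last_eq:
  fixes S :: "elt set"
  assumes "finite S" "1 \<le> i" "i \<le> card S"
  shows "kth_last S i = sorted_list_of_set S ! (card S - i)"
proof -
  have "i - 1 < card S" using assms by linarith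
  then have "kth_last S i = sorted_list_of_set S ! (card S - 1 - (i - 1))"
    unfolding kth_last_def using sl_rev_nth[OF assms(1)] by simp
  also have "card S - 1 - (i - 1) = card S - i" using assms by linarith
  finally show ?thesis .
qed

lemma kfun_rk:
  assumes "u \<in> Ibar n r"
  shows "kfun n r a u = rk (Aset n r a (a u)) u + 1"
proof -
  have "{u' \<in> Ibar n r. u' \<le> u \<and> a u' = a u} = insert u {y \<in> Aset n r a (a u). y < u}"
    using assms unfolding Aset_def by auto
  moreover have "u \<notin> {y \<in> Aset n r a (a u). y < u}" by simp
  moreover have "finite {y \<in> Aset n r a (a u). y < u}" by simp
  ultimately show ?thesis unfolding kfun_def rk_def by simp
qed

lemma rk_bound: "x \<in> S \<Longrightarrow> finite S \<Longrightarrow> rk S x < card S"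
  unfolding rk_def by (rule sl_rank_bound)

lemma rk_nth: "finite S \<Longrightarrow> i < card S \<Longrightarrow> rk S (sorted_list_of_set S ! i) = i"
  unfolding rk_def by (rule sl_rank_nth)

lemma nth_rk: "finite S \<Longrightarrow> x \<in> S \<Longrightarrow> sorted_list_of_set S ! rk S x = x"
  unfolding rk_def by (rule sl_nth_rank)



locale Wl =
  fixes n r d :: nat and a b :: "elt \<Rightarrow> nat"
  assumes va: "\<forall>u \<in> Ibar n r. a u \<in> {1..d}" and vb: "\<forall>v \<in> Ibar n r. b v \<in> {1..d}"
    and E: "\<forall>k. card (Aset n r a k) = card (Bset n r b k)"
begin

abbreviation "F \<equiv> phi d n r a b"
abbreviation "AA k \<equiv> Aset n r a k"
abbreviation "BB k \<equiv> Bset n r b k"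
abbreviation "II \<equiv> Ibar n r"

lemma memF:
  "(u, v) \<in> F \<longleftrightarrow> u \<in> II \<and> v \<in> II \<and> b v = a u \<and>
      rk (AA (a u)) u + rk (BB (a u)) v + 1 = card (AA (a u))"
proof
  assume "(u, v) \<in> F"
  then obtain k where k: "k \<in> {1..d}" "(u, v) \<in> cross_connect (AA k) (BB k)"
    using phi_eq[OF E] by auto
  then have h: "u \<in> AA k \<and> v \<in> BB k \<and> rk (AA k) u + rk (BB k) v + 1 = card (AA k)"
    using cc_mem[OF finite_Aset finite_Bset E[rule_format]] by blast
  then have "a u = k" unfolding Aset_def by simp
  then show "u \<in> II \<and> v \<in> II \<and> b v = a u \<and>
      rk (AA (a u)) u + rk (BB (a u)) v + 1 = card (AA (a u))"
    using h unfolding Aset_def Bset_def by simp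
next
  assume h: "u \<in> II \<and> v \<in> II \<and> b v = a u \<and>
      rk (AA (a u)) u + rk (BB (a u)) v + 1 = card (AA (a u))"
  then have "u \<in> AA (a u)" "v \<in> BB (a u)" unfolding Aset_def Bset_def by auto
  then have "(u, v) \<in> cross_connect (AA (a u)) (BB (a u))"
    using h cc_mem[OF finite_Aset finite_Bset E[rule_format]] by blast
  moreover have "a u \<in> {1..d}" using h va by blast
  ultimately show "(u, v) \<in> F" using phi_eq[OF E] by blast
qed

lemma F_sub: "(u, v) \<in> F \<Longrightarrow> u \<in> II \<and> v \<in> II \<and> b v = a u"
  using memF by blast

lemma finF: "finite F"
proof -
  have "F \<subseteq> II \<times> II" using F_sub by auto
  then show ?thesis by (rule finite_subset) simp
qed

definition pv :: "elt \<Rightarrow> elt" where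
  "pv u = kth_last (BB (a u)) (kfun n r a u)"

lemma pv_F:
  assumes u: "u \<in> II"
  shows "(u, pv u) \<in> F"
proof -
  let ?k = "a u"
  let ?c = "card (AA ?k)"
  have uA: "u \<in> AA ?k" using u unfolding Aset_def by simp
  have rl: "rk (AA ?k) u < ?c" by (rule rk_bound[OF uA]) simp
  have cB: "card (BB ?k) = ?c" using E by simp
  have "pv u = sorted_list_of_set (BB ?k) ! (?c - (rk (AA ?k) u + 1))"
    unfolding pv_def kfun_rk[OF u] using kth_last_eq[of "BB ?k" "rk (AA ?k) u + 1"] rl cB by simp
  moreover have i: "?c - (rk (AA ?k) u + 1) < card (BB ?k)" using rl cB by simp
  ultimately have m: "pv u \<in> BB ?k" and rv: "rk (BB ?k) (pv u) = ?c - (rk (AA ?k) u + 1)"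
    using sl_nth_mem[OF finite_Bset i] rk_nth[OF finite_Bset i] by simp_all
  show ?thesis unfolding memF using u m rv rl unfolding Bset_def by auto
qed

lemma F_pv:
  assumes "(u, v) \<in> F"
  shows "v = pv u"
proof -
  let ?k = "a u"
  let ?c = "card (AA ?k)"
  have h: "u \<in> II" "v \<in> II" "b v = ?k" "rk (AA ?k) u + rk (BB ?k) v + 1 = ?c"
    using assms memF by auto
  have h2: "u \<in> II" "pv u \<in> II" "b (pv u) = ?k" "rk (AA ?k) u + rk (BB ?k) (pv u) + 1 = ?c"
    using pv_F[OF h(1)] memF by auto
  have "v \<in> BB ?k" "pv u \<in> BB ?k" using h h2 unfolding Bset_def by auto
  moreover have "rk (BB ?k) v = rk (BB ?k) (pv u)" using h(4) h2(4) by simp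
  ultimately show ?thesis using nth_rk[OF finite_Bset] by metis
qed

lemma F_unique_u:
  assumes "(u, v) \<in> F" "(u', v) \<in> F"
  shows "u' = u"
proof -
  have h: "u \<in> II" "b v = a u" "rk (AA (a u)) u + rk (BB (a u)) v + 1 = card (AA (a u))"
    using assms(1) memF by auto
  have h2: "u' \<in> II" "b v = a u'" "rk (AA (a u')) u' + rk (BB (a u')) v + 1 = card (AA (a u'))"
    using assms(2) memF by auto
  have eq: "a u' = a u" using h h2 by simp
  have "u \<in> AA (a u)" "u' \<in> AA (a u)" using h h2 eq unfolding Aset_def by auto
  moreover have "rk (AA (a u)) u' = rk (AA (a u)) u" using h(3) h2(3) eq by simp
  ultimately show ?thesis using nth_rk[OF finite_Aset] by metis
qed

lemma config: "r_configuration n r F"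
  unfolding r_configuration_def
proof (intro conjI ballI)
  show "F \<subseteq> II \<times> II" using F_sub by auto
next
  fix u assume "u \<in> II"
  then show "\<exists>!v. (u, v) \<in> F" using pv_F F_pv by blast
next
  fix v assume v: "v \<in> II"
  let ?k = "b v"
  let ?c = "card (AA ?k)"
  have vB: "v \<in> BB ?k" using v unfolding Bset_def by simp
  have cB: "card (BB ?k) = ?c" using E by simp
  have rl: "rk (BB ?k) v < ?c" using rk_bound[OF vB] cB by simp
  define u where "u = sorted_list_of_set (AA ?k) ! (?c - 1 - rk (BB ?k) v)"
  have i: "?c - 1 - rk (BB ?k) v < ?c" using rl by simp
  have uA: "u \<in> AA ?k" unfolding u_def using sl_nth_mem[OF finite_Aset i] .
  have ru: "rk (AA ?k) u = ?c - 1 - rk (BB ?k) v" unfolding u_def using rk_nth[OF finite_Aset i] .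
  have "(u, v) \<in> F" unfolding memF using uA ru v rl unfolding Aset_def by auto
  then show "\<exists>!u. (u, v) \<in> F" using F_unique_u by blast
qed

lemma cross_same:
  assumes "(u, v) \<in> F" "(u', v') \<in> F" "a u' = a u" "u < u'"
  shows "v' < v"
proof -
  let ?k = "a u"
  have h: "u \<in> II" "v \<in> II" "b v = ?k" "rk (AA ?k) u + rk (BB ?k) v + 1 = card (AA ?k)"
    using assms(1) memF by auto
  have h2: "u' \<in> II" "v' \<in> II" "b v' = ?k" "rk (AA ?k) u' + rk (BB ?k) v' + 1 = card (AA ?k)"
    using assms(2,3) memF by auto
  have uA: "u \<in> AA ?k" using h unfolding Aset_def by simp
  have "rk (AA ?k) u < rk (AA ?k) u'" using rk_strict[OF finite_Aset assms(4) uA] .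
  then have "rk (BB ?k) v' < rk (BB ?k) v" using h(4) h2(4) by linarith
  moreover have "v \<in> BB ?k" "v' \<in> BB ?k" using h h2 unfolding Bset_def by auto
  ultimately show ?thesis using rk_less_iff[OF finite_Bset] by blast
qed

end



context Wl begin

lemma lfun_eq:
  assumes "u \<in> II"
  shows "lfun n r a u = card {y \<in> AA (a u - 1). y \<le> u}"
proof -
  have "{u' \<in> II. u' \<le> u \<and> a u' = a u - 1} = {y \<in> AA (a u - 1). y \<le> u}"
    unfolding Aset_def by auto
  then show ?thesis unfolding lfun_def by simp
qed

lemma pred:
  assumes C: "condition_C n r a b" and uv: "(u, v) \<in> F" and k: "a u > 1"
  shows "\<exists>u' v'. (u', v') \<in> F \<and> a u' = a u - 1 \<and> u' < u \<and> v' < v"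
proof -
  have u: "u \<in> II" using uv F_sub by blast
  let ?k = "a u"
  define L where "L = lfun n r a u"
  let ?Ls = "{y \<in> AA (?k - 1). y \<le> u}"
  have LL: "L = card ?Ls" unfolding L_def using lfun_eq[OF u] .
  have Cu: "L > 0" "kth_last (BB (?k - 1)) L < kth_last (BB ?k) (kfun n r a u)"
    using C u k unfolding condition_C_def L_def by auto
  let ?c = "card (AA (?k - 1))"
  have Lc: "L \<le> ?c" unfolding LL by (rule card_mono) auto
  define u' where "u' = sorted_list_of_set (AA (?k - 1)) ! (L - 1)"
  have i: "L - 1 < ?c" using Lc Cu by linarith
  have u'A: "u' \<in> AA (?k - 1)" unfolding u'_def using sl_nth_mem[OF finite_Aset i] .
  have ru': "rk (AA (?k - 1)) u' = L - 1" unfolding u'_def using rk_nth[OF finite_Aset i] .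
  have u'I: "u' \<in> II" and au': "a u' = ?k - 1" using u'A unfolding Aset_def by auto
  have "u' \<noteq> u" using au' k by auto
  moreover have "\<not> u < u'"
  proof
    assume "u < u'"
    then have "?Ls \<subseteq> {y \<in> AA (?k - 1). y < u'}" by auto
    then have "L \<le> rk (AA (?k - 1)) u'" unfolding LL rk_def by (intro card_mono) auto
    then show False using ru' Cu by linarith
  qed
  ultimately have lt: "u' < u" by auto
  have kf: "kfun n r a u' = L" using kfun_rk[OF u'I] ru' au' Cu by simp
  have "(u', pv u') \<in> F" using pv_F[OF u'I] .
  moreover have "pv u' = kth_last (BB (?k - 1)) L" unfolding pv_def kf au' ..
  moreover have "v = kth_last (BB ?k) (kfun n r a u)" using F_pv[OF uv] unfolding pv_def .
  ultimately show ?thesis using lt au' Cu by metis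
qed

lemma level_lt:
  assumes C: "condition_C n r a b" and uv: "(u, v) \<in> F"
  shows "(u', v') \<in> F \<Longrightarrow> u' < u \<Longrightarrow> v' < v \<Longrightarrow> a u' < a u"
proof (induction "a u'" arbitrary: u' v' rule: less_induct)
  case less
  show ?case
  proof (rule ccontr)
    assume "\<not> a u' < a u"
    then have ge: "a u \<le> a u'" by simp
    show False
    proof (cases "a u' = a u")
      case True
      then have "v < v'" using cross_same[OF less.prems(1) uv True[symmetric] less.prems(2)] by simp
      then show False using less.prems(3) by simp
    next
      case False
      have "a u \<ge> 1" using uv F_sub va by fastforce
      then have "a u' > 1" using False ge by linarith
      then obtain u'' v'' where h: "(u'', v'') \<in> F" "a u'' = a u' - 1" "u'' < u'" "v'' < v'"
        using pred[OF C less.prems(1)] by blast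
      have "a u'' < a u'" using h(2) \<open>a u' > 1\<close> by simp
      moreover have "u'' < u" "v'' < v" using h less.prems by auto
      ultimately have "a u'' < a u" using less.hyps h(1) by blast
      then show False using h(2) ge False by linarith
    qed
  qed
qed

lemma chain_exists:
  assumes C: "condition_C n r a b"
  shows "(u, v) \<in> F \<Longrightarrow> \<exists>S. chainF F u v S \<and> card S = a u"
proof (induction "a u" arbitrary: u v rule: less_induct)
  case less
  have a1: "a u \<ge> 1" using less.prems F_sub va by fastforce
  show ?case
  proof (cases "a u = 1")
    case True
    then show ?thesis using chain_single[OF less.prems] by auto
  next
    case False
    then have "a u > 1" using a1 by simp
    then obtain u' v' where h: "(u', v') \<in> F" "a u' = a u - 1" "u' < u" "v' < v"
      using pred[OF C less.prems] by blast
    have "a u' < a u" using h(2) \<open>a u > 1\<close> by simp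
    then obtain S' where S': "chainF F u' v' S'" "card S' = a u'" using less.hyps h(1) by blast
    have nin: "(u, v) \<notin> S'" using S'(1) h(3) unfolding chainF_def by auto
    have fS': "finite S'" using S'(1) finF unfolding chainF_def by (auto intro: finite_subset)
    have "chainF F u v (insert (u, v) S')"
      unfolding chainF_def
    proof (intro conjI)
      show "insert (u, v) S' \<subseteq> F" using S'(1) less.prems unfolding chainF_def by auto
      show "(u, v) \<in> insert (u, v) S'" by simp
      show "\<forall>(x, y) \<in> insert (u, v) S'. x \<le> u \<and> y \<le> v"
        using S'(1) h(3,4) unfolding chainF_def by fastforce
      have nc: "noncrossing p (u, v) \<and> noncrossing (u, v) p" if "p \<in> S'" for p
        using that S'(1) h(3,4) unfolding chainF_def noncrossing_def by fastforce
      show "pairwise_noncrossing (insert (u, v) S')"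
        using S'(1) nc unfolding chainF_def pairwise_noncrossing_def by blast
    qed
    moreover have "card (insert (u, v) S') = a u" using S'(2) nin fS' h(2) \<open>a u > 1\<close> by simp
    ultimately show ?thesis by blast
  qed
qed

lemma chain_upper:
  assumes C: "condition_C n r a b" and uv: "(u, v) \<in> F" and S: "chainF F u v S"
  shows "card S \<le> a u"
proof -
  have SF: "S \<subseteq> F" and pnc: "pairwise_noncrossing S" and uvS: "(u, v) \<in> S"
    and le: "\<forall>(x, y) \<in> S. x \<le> u \<and> y \<le> v" using S unfolding chainF_def by auto
  have inj: "inj_on (\<lambda>p. a (fst p)) S"
  proof (rule inj_onI)
    fix p q assume pq: "p \<in> S" "q \<in> S" "a (fst p) = a (fst q)"
    show "p = q"
    proof (rule ccontr)
      assume "p \<noteq> q"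
      then have "noncrossing p q" using pnc pq unfolding pairwise_noncrossing_def by blast
      then show False
      proof (unfold noncrossing_def, elim disjE conjE)
        assume "fst p < fst q" "snd p < snd q"
        then show False using cross_same[of "fst p" "snd p" "fst q" "snd q"] pq SF by force
      next
        assume "fst q < fst p" "snd q < snd p"
        then show False using cross_same[of "fst q" "snd q" "fst p" "snd p"] pq SF by force
      qed
    qed
  qed
  have img: "(\<lambda>p. a (fst p)) ` S \<subseteq> {1..a u}"
  proof
    fix z assume "z \<in> (\<lambda>p. a (fst p)) ` S"
    then obtain p where p: "p \<in> S" "z = a (fst p)" by blast
    have pF: "(fst p, snd p) \<in> F" using p SF by auto
    have "a (fst p) \<ge> 1" using F_sub[OF pF] va by fastforce
    moreover have "a (fst p) \<le> a u"
    proof (cases "p = (u, v)")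
      case True then show ?thesis by simp
    next
      case False
      then have "noncrossing p (u, v)" using pnc p uvS unfolding pairwise_noncrossing_def by blast
      moreover have "fst p \<le> u" "snd p \<le> v" using le p by auto
      ultimately have "fst p < u" "snd p < v" unfolding noncrossing_def by auto
      then show ?thesis using level_lt[OF C uv pF] by simp
    qed
    ultimately show "z \<in> {1..a u}" using p by simp
  qed
  have "card S \<le> card {1..a u}" by (rule card_inj_on_le[OF inj img]) simp
  then show ?thesis by simp
qed

lemma suff:
  assumes C: "condition_C n r a b"
  shows "r_configuration n r F \<and> (\<forall>u \<in> II. Phi_a F u = a u) \<and> (\<forall>v \<in> II. Phi_b F v = b v)"
proof -
  have valeq: "val F u v = a u" if uv: "(u, v) \<in> F" for u v
  proof -
    obtain S0 where "chainF F u v S0" "card S0 = a u" using chain_exists[OF C uv] by blast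
    then show ?thesis using val_eqI[OF finF] chain_upper[OF C uv] by blast
  qed
  have cfg: "r_configuration n r F" by (rule config)
  have cu: "\<forall>u \<in> II. \<exists>!v. (u, v) \<in> F" and cv: "\<forall>v \<in> II. \<exists>!u. (u, v) \<in> F"
    using cfg unfolding r_configuration_def by auto
  have pa: "Phi_a F u = a u" if u: "u \<in> II" for u
  proof -
    obtain v where v: "(u, v) \<in> F" using cu u by blast
    have "Phi_a F u = val F u v" using v cu u by (intro Phi_a_val) blast+
    then show ?thesis using valeq[OF v] by simp
  qed
  have pb: "Phi_b F v = b v" if v: "v \<in> II" for v
  proof -
    obtain u where u: "(u, v) \<in> F" using cv v by blast
    have "Phi_b F v = val F u v" using u cv v by (intro Phi_b_val) blast+
    then show ?thesis using valeq[OF u] F_sub[OF u] by simp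
  qed
  show ?thesis using cfg pa pb by blast
qed

end



context Wl begin

lemma C_from_pred:
  assumes u: "u \<in> II" and k: "a u > 1" and h: "(u1, v1) \<in> F" "a u1 = a u - 1" "u1 < u" "v1 < pv u"
  shows "lfun n r a u > 0 \<and> card (BB (a u - 1)) \<ge> lfun n r a u \<and> card (BB (a u)) \<ge> kfun n r a u \<and>
      kth_last (BB (a u - 1)) (lfun n r a u) < kth_last (BB (a u)) (kfun n r a u)"
proof -
  let ?k = "a u"
  let ?Ls = "{y \<in> AA (?k - 1). y \<le> u}"
  define L where "L = lfun n r a u"
  have LL: "L = card ?Ls" unfolding L_def using lfun_eq[OF u] .
  have u1I: "u1 \<in> II" using h(1) F_sub by blast
  have u1A: "u1 \<in> AA (?k - 1)" using u1I h(2) unfolding Aset_def by simp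
  have u1L: "u1 \<in> ?Ls" using u1A h(3) by simp
  have Lne: "?Ls \<noteq> {}" using u1L by blast
  have L0: "L > 0" unfolding LL using Lne by (intro card_gt_0_iff[THEN iffD2] conjI) simp_all
  let ?c = "card (AA (?k - 1))"
  have Lc: "L \<le> ?c" unfolding LL by (rule card_mono) auto
  have cB': "card (BB (?k - 1)) = ?c" using E by simp
  have uA: "u \<in> AA ?k" using u unfolding Aset_def by simp
  have kfu: "kfun n r a u \<le> card (BB ?k)" using kfun_rk[OF u] rk_bound[OF uA] E by simp
  have "{y \<in> AA (?k - 1). y < u1} \<subset> ?Ls" using u1L h(3) by auto
  then have rkl: "rk (AA (?k - 1)) u1 < L" unfolding LL rk_def by (intro psubset_card_mono) auto
  have kf1: "kfun n r a u1 = rk (AA (?k - 1)) u1 + 1" using kfun_rk[OF u1I] h(2) by simp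
  have "kth_last (BB (?k - 1)) L = sorted_list_of_set (BB (?k - 1)) ! (?c - L)"
    using kth_last_eq[of "BB (?k - 1)" L] L0 Lc cB' by simp
  also have "\<dots> \<le> sorted_list_of_set (BB (?k - 1)) ! (?c - kfun n r a u1)"
  proof -
    have i1: "?c - L < card (BB (?k - 1))" using L0 Lc cB' by linarith
    have i2: "?c - kfun n r a u1 < card (BB (?k - 1))" using kf1 rkl Lc cB' by linarith
    have "?c - L \<le> ?c - kfun n r a u1" using kf1 rkl by linarith
    then show ?thesis using sl_nth_le_iff[OF finite_Bset i1 i2] by simp
  qed
  also have "\<dots> = kth_last (BB (?k - 1)) (kfun n r a u1)"
    using kth_last_eq[of "BB (?k - 1)" "kfun n r a u1"] kf1 rkl Lc cB' by simp
  also have "\<dots> = v1" using F_pv[OF h(1)] h(2) unfolding pv_def by simp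
  also have "\<dots> < pv u" by (rule h(4))
  also have "\<dots> = kth_last (BB ?k) (kfun n r a u)" unfolding pv_def ..
  finally show ?thesis using L0 Lc cB' kfu unfolding L_def by simp
qed

lemma nec:
  assumes P: "\<forall>u \<in> II. Phi_a F u = a u"
  shows "condition_C n r a b"
  unfolding condition_C_def
proof (intro ballI impI)
  fix u assume u: "u \<in> II" and k: "1 < a u"
  let ?k = "a u"
  define v where "v = pv u"
  have uv: "(u, v) \<in> F" unfolding v_def by (rule pv_F[OF u])
  have valF: "val F x y = a x" if xy: "(x, y) \<in> F" for x y
  proof -
    have xI: "x \<in> II" using xy F_sub by blast
    have "Phi_a F x = val F x y" using xy F_pv by (intro Phi_a_val) blast+
    then show ?thesis using P xI by simp
  qed
  obtain S where S: "chainF F u v S" "card S = ?k" using val_attain[OF finF uv] valF[OF uv] by auto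
  have SF: "S \<subseteq> F" and pnc: "pairwise_noncrossing S" and uvS: "(u, v) \<in> S"
    and le: "\<forall>(x, y) \<in> S. x \<le> u \<and> y \<le> v" using S(1) unfolding chainF_def by auto
  have fS: "finite S" using SF finF by (rule finite_subset)
  define S' where "S' = S - {(u, v)}"
  have cS': "card S' = ?k - 1" unfolding S'_def using S(2) uvS fS by simp
  then have ne: "S' \<noteq> {}" using k by auto
  have fS': "finite S'" unfolding S'_def using fS by simp
  define x0 where "x0 = Max (fst ` S')"
  have "x0 \<in> fst ` S'" unfolding x0_def using fS' ne by (intro Max_in) auto
  then obtain q where q: "q \<in> S'" "fst q = x0" by auto
  have qmax: "fst p \<le> fst q" if "p \<in> S'" for p
    using that q(2) fS' unfolding x0_def by (auto intro: Max_ge)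
  have qS: "q \<in> S" "q \<noteq> (u, v)" using q(1) unfolding S'_def by auto
  have "noncrossing q (u, v)" using pnc qS uvS unfolding pairwise_noncrossing_def by blast
  moreover have "fst q \<le> u" "snd q \<le> v" using le qS(1) by auto
  ultimately have qlt: "fst q < u" "snd q < v" unfolding noncrossing_def by auto
  have qF: "(fst q, snd q) \<in> F" using qS SF by auto
  have "chainF F (fst q) (snd q) S'"
    unfolding chainF_def
  proof (intro conjI)
    show "S' \<subseteq> F" using SF unfolding S'_def by auto
    show "pairwise_noncrossing S'" using pnc unfolding S'_def pairwise_noncrossing_def by blast
    show "(fst q, snd q) \<in> S'" using q(1) by simp
    show "\<forall>(x, y) \<in> S'. x \<le> fst q \<and> y \<le> snd q"
    proof (intro ballI, clarify)
      fix x y assume xy: "(x, y) \<in> S'"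
      show "x \<le> fst q \<and> y \<le> snd q"
      proof (cases "(x, y) = q")
        case True then show ?thesis by auto
      next
        case False
        then have "noncrossing (x, y) q" using pnc xy q(1) unfolding S'_def pairwise_noncrossing_def by blast
        moreover have "x \<le> fst q" using qmax[OF xy] by simp
        ultimately show ?thesis unfolding noncrossing_def by auto
      qed
    qed
  qed
  then have ge: "?k - 1 \<le> a (fst q)" using val_ge[OF finF] valF[OF qF] cS' by metis
  obtain Sq where Sq: "chainF F (fst q) (snd q) Sq" "card Sq = a (fst q)"
    using val_attain[OF finF qF] valF[OF qF] by auto
  have fSq: "finite Sq" using Sq(1) finF unfolding chainF_def by (auto intro: finite_subset)
  have nin: "(u, v) \<notin> Sq" using Sq(1) qlt unfolding chainF_def by auto
  have "chainF F u v (insert (u, v) Sq)"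
    unfolding chainF_def
  proof (intro conjI)
    show "insert (u, v) Sq \<subseteq> F" using Sq(1) uv unfolding chainF_def by auto
    show "(u, v) \<in> insert (u, v) Sq" by simp
    show "\<forall>(x, y) \<in> insert (u, v) Sq. x \<le> u \<and> y \<le> v"
      using Sq(1) qlt unfolding chainF_def by fastforce
    have nc: "noncrossing p (u, v) \<and> noncrossing (u, v) p" if "p \<in> Sq" for p
      using that Sq(1) qlt unfolding chainF_def noncrossing_def by fastforce
    show "pairwise_noncrossing (insert (u, v) Sq)"
      using Sq(1) nc unfolding chainF_def pairwise_noncrossing_def by blast
  qed
  then have "card (insert (u, v) Sq) \<le> ?k" using val_ge[OF finF] valF[OF uv] by metis
  then have "a (fst q) + 1 \<le> ?k" using Sq(2) nin fSq by simp
  then have aq: "a (fst q) = ?k - 1" using ge by linarith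
  show "lfun n r a u > 0 \<and> card (BB (a u - 1)) \<ge> lfun n r a u \<and> card (BB (a u)) \<ge> kfun n r a u \<and>
      kth_last (BB (a u - 1)) (lfun n r a u) < kth_last (BB (a u)) (kfun n r a u)"
    using C_from_pred[OF u k qF aq qlt(1)] qlt(2) unfolding v_def by blast
qed

end


theorem lemma8:
  fixes n r d :: nat and a b :: "nat \<times> nat \<Rightarrow> nat"
  assumes "n \<ge> 1" and "r \<ge> 1" and "d \<ge> 1"
    and "in_Wstar d n r a b"
  shows "(r_configuration n r (phi d n r a b) \<and>
          (\<forall>u \<in> Ibar n r. Phi_a (phi d n r a b) u = a u) \<and>
          (\<forall>v \<in> Ibar n r. Phi_b (phi d n r a b) v = b v))
         \<longleftrightarrow> condition_C n r a b"
proof -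
  have va: "\<forall>u \<in> Ibar n r. a u \<in> {1..d}" and vb: "\<forall>v \<in> Ibar n r. b v \<in> {1..d}"
    using assms(4) unfolding in_Wstar_def by auto
  show ?thesis
  proof
    assume H: "r_configuration n r (phi d n r a b) \<and>
          (\<forall>u \<in> Ibar n r. Phi_a (phi d n r a b) u = a u) \<and>
          (\<forall>v \<in> Ibar n r. Phi_b (phi d n r a b) v = b v)"
    have E: "\<forall>k. card (Aset n r a k) = card (Bset n r b k)"
      using config_E H by blast
    interpret W: Wl n r d a b using va vb E by unfold_locales
    show "condition_C n r a b" using W.nec H by blast
  next
    assume C: "condition_C n r a b"
    have E: "\<forall>k. card (Aset n r a k) = card (Bset n r b k)"
      using C_E[OF assms(4) C] by blast
    interpret W: Wl n r d a b using va vb E by unfold_locales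
    show "r_configuration n r (phi d n r a b) \<and>
          (\<forall>u \<in> Ibar n r. Phi_a (phi d n r a b) u = a u) \<and>
          (\<forall>v \<in> Ibar n r. Phi_b (phi d n r a b) v = b v)"
      using W.suff[OF C] .
  qed
qed

end
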